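(* Let $a\in\mathfrak{u}(n)$ be diagonal, $M$ its adjoint orbit, $\gamma\in C_a(\mathbb{R},M)$ with $\gamma=gag^{-1}$, $g^{-1}g_x=u=\Phi(\gamma)$, $g(-\infty)=I$, and let $\eta=gvg^{-1}$ with $v\in\mathcal{S}(\mathbb{R},\mathfrak{u}(n)_a^\perp)$ (a vector field along $\gamma$ tangent to $M$). Then there exists a unique smooth vector field $\zeta$ along $\gamma$ normal to $M$ (i.e. $\zeta(x)\in g(x)\mathfrak{u}(n)_a g(x)^{-1}$ for all $x$) such that $(\eta+\zeta)_x(x)$ is tangent to $M$ at $\gamma(x)$ for all $x$ and $\zeta(-\infty)=0$. Moreover $L_\gamma(\eta)=(\eta+\zeta)_x$.
   Context: $\mathfrak{u}(n)$: skew-Hermitian matrices with $\langle x,y\rangle=-\mathrm{tr}(xy)$; $\mathfrak{u}(n)_a$ centralizer of $a$, $\mathfrak{u}(n)_a^\perp$ its orthogonal complement, $\pi_a,\pi_a^\perp$ orthogonal projections. The tangent space of $M$ at $gag^{-1}$ is $g\,\mathfrak{u}(n)_a^\perp g^{-1}$ and the normal space is $g\,\mathfrak{u}(n)_ag^{-1}$. $C_a(\mathbb{R},M)$: smooth $\gamma:\mathbb{R}\to M$, $\gamma(-\infty)=a$, $\gamma_x$ Schwartz. $\Phi(\gamma)=g^{-1}g_x$ for the unique $g$ with $\gamma=gag^{-1}$, $g(-\infty)=I$, $g^{-1}g_x\in\mathfrak{u}(n)_a^\perp$. For $u\in\mathcal{S}(\mathbb{R},\mathfrak{u}(n)_a^\perp)$,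 $P_u(v)=v_x+\pi_a^\perp([u,v])-[u,T_u(v)]$ with $T_u(v)(x)=\int_{-\infty}^x\pi_a([u,v])\,dy$. The operator $L_\gamma$ is defined by $L_\gamma(gvg^{-1})=gP_u(v)g^{-1}$. *)

theory Defs
  imports "HOL-Analysis.Analysis"
begin

type_synonym 'n cmat = "complex^'n^'n"

definition cadj :: "'n::finite cmat \<Rightarrow> 'n cmat" where
  "cadj A = (\<chi> i j. cnj (A $ j $ i))"

definition mtrace :: "'n::finite cmat \<Rightarrow> complex" where
  "mtrace A = (\<Sum>i\<in>UNIV. A $ i $ i)"

definition unitary :: "'n::finite cmat \<Rightarrow> bool" where
  "unitary g \<longleftrightarrow> cadj g ** g = mat 1"

definition un :: "'n::finite cmat set" where
  "un = {x. cadj x = - x}"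

text \<open>inner product <x,y> = -tr(xy) (real on u(n))\<close>
definition ip :: "'n::finite cmat \<Rightarrow> 'n cmat \<Rightarrow> real" where
  "ip x y = - Re (mtrace (x ** y))"

definition bracket :: "'n::finite cmat \<Rightarrow> 'n cmat \<Rightarrow> 'n cmat" where
  "bracket x y = x ** y - y ** x"

definition is_diag :: "'n::finite cmat \<Rightarrow> bool" where
  "is_diag a \<longleftrightarrow> (\<forall>i j. i \<noteq> j \<longrightarrow> a $ i $ j = 0)"

definition cent :: "'n::finite cmat \<Rightarrow> 'n cmat set" where
  "cent a = {x \<in> un. x ** a = a ** x}"

definition cent_perp :: "'n::finite cmat \<Rightarrow> 'n cmat set" where
  "cent_perp a = {y \<in> un. \<forall>z\<in>cent a. ip y z = 0}"

definition proj_a :: "'n::finite cmat \<Rightarrow> 'n cmat \<Rightarrow> 'n cmat" where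
  "proj_a a x = (THE y. y \<in> cent a \<and> (\<forall>z\<in>cent a. ip (x - y) z = 0))"

definition proj_perp :: "'n::finite cmat \<Rightarrow> 'n cmat \<Rightarrow> 'n cmat" where
  "proj_perp a x = x - proj_a a x"

definition orbit :: "'n::finite cmat \<Rightarrow> 'n cmat set" where
  "orbit a = {g ** a ** matrix_inv g | g. unitary g}"

fun vderiv :: "nat \<Rightarrow> (real \<Rightarrow> 'a::real_normed_vector) \<Rightarrow> real \<Rightarrow> 'a" where
  "vderiv 0 f = f"
| "vderiv (Suc k) f = (\<lambda>x. vector_derivative (vderiv k f) (at x))"

definition smooth :: "(real \<Rightarrow> 'a::real_normed_vector) \<Rightarrow> bool" where
  "smooth f \<longleftrightarrow> (\<forall>k x. vderiv k f differentiable (at x))"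

definition schwartz :: "(real \<Rightarrow> 'a::real_normed_vector) \<Rightarrow> bool" where
  "schwartz f \<longleftrightarrow> smooth f \<and>
     (\<forall>k m. bounded (range (\<lambda>x. \<bar>x\<bar> ^ m * norm (vderiv k f x))))"

definition Ca :: "'n::finite cmat \<Rightarrow> (real \<Rightarrow> 'n cmat) set" where
  "Ca a = {\<gamma>. smooth \<gamma> \<and> (\<forall>x. \<gamma> x \<in> orbit a) \<and> (\<gamma> \<longlongrightarrow> a) at_bot
              \<and> schwartz (vderiv 1 \<gamma>)}"

definition Top :: "'n::finite cmat \<Rightarrow> (real \<Rightarrow> 'n cmat) \<Rightarrow> (real \<Rightarrow> 'n cmat) \<Rightarrow> real \<Rightarrow> 'n cmat" where
  "Top a u v x = integral {..x} (\<lambda>y. proj_a a (bracket (u y) (v y)))"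

definition Pop :: "'n::finite cmat \<Rightarrow> (real \<Rightarrow> 'n cmat) \<Rightarrow> (real \<Rightarrow> 'n cmat) \<Rightarrow> real \<Rightarrow> 'n cmat" where
  "Pop a u v x = vderiv 1 v x + proj_perp a (bracket (u x) (v x)) - bracket (u x) (Top a u v x)"

text \<open>L_gamma(g v g^{-1}) = g P_u(v) g^{-1}, with u = g^{-1} g_x\<close>
definition Lop :: "'n::finite cmat \<Rightarrow> (real \<Rightarrow> 'n cmat) \<Rightarrow> (real \<Rightarrow> 'n cmat) \<Rightarrow> real \<Rightarrow> 'n cmat" where
  "Lop a g v x = g x ** Pop a (\<lambda>y. matrix_inv (g y) ** vderiv 1 g y) v x ** matrix_inv (g x)"

end

theory Submission
  imports Defs "HOL-Analysis.Analysis"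
begin


lemma vderiv_Suc': "vderiv (Suc k) f = vderiv k (vderiv 1 f)"
  by (induction k) auto

lemma vderiv_1: "vderiv 1 f = (\<lambda>x. vector_derivative f (at x))"
  by simp

lemma vderiv1_eq:
  assumes "\<And>x. (f has_vector_derivative f' x) (at x)"
  shows "vderiv 1 f = f'"
  using assms by (auto simp: vector_derivative_at)

lemma smooth_iff: "smooth f \<longleftrightarrow> (\<forall>x. f differentiable at x) \<and> smooth (vderiv 1 f)"
proof
  assume "smooth f"
  then show "(\<forall>x. f differentiable at x) \<and> smooth (vderiv 1 f)"
    unfolding smooth_def
  proof (intro conjI allI)
    fix x assume "\<forall>k x. vderiv k f differentiable at x"
    then show "f differentiable at x" by (metis vderiv.simps(1))
  next
    fix k x assume "\<forall>k x. vderiv k f differentiable at x"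
    then show "vderiv k (vderiv 1 f) differentiable at x" by (simp only: vderiv_Suc'[symmetric])
  qed
next
  assume A: "(\<forall>x. f differentiable at x) \<and> smooth (vderiv 1 f)"
  show "smooth f" unfolding smooth_def
  proof (intro allI)
    fix k x show "vderiv k f differentiable at x"
    proof (cases k)
      case 0 then show ?thesis using A by simp
    next
      case (Suc m)
      have "vderiv k f = vderiv m (vderiv 1 f)" unfolding Suc by (rule vderiv_Suc')
      then show ?thesis using A unfolding smooth_def by simp
    qed
  qed
qed

lemma smooth_has_deriv:
  assumes "smooth f" shows "(f has_vector_derivative vderiv 1 f x) (at x)"
  using assms unfolding smooth_def
  by (metis vderiv.simps(1) vderiv_1 vector_derivative_works)

lemma smooth_differentiable: "smooth f \<Longrightarrow> f differentiable at x"
  using smooth_iff[of f] by blast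

lemma smooth_D: "smooth f \<Longrightarrow> smooth (vderiv 1 f)"
  using smooth_iff[of f] by blast

lemma smooth_deriv:
  assumes "\<And>x. (f has_vector_derivative f' x) (at x)" "smooth f'"
  shows "smooth f"
proof -
  have "vderiv 1 f = f'" by (rule vderiv1_eq[OF assms(1)])
  then show ?thesis using assms by (subst smooth_iff) (auto intro: differentiableI_vector)
qed

lemma smooth_continuous: "smooth f \<Longrightarrow> continuous_on UNIV f"
  by (intro continuous_at_imp_continuous_on ballI differentiable_imp_continuous_within smooth_differentiable)

lemma vderiv_add:
  assumes "\<And>j x. j < k \<Longrightarrow> vderiv j f differentiable at x"
    "\<And>j x. j < k \<Longrightarrow> vderiv j g differentiable at x"
  shows "vderiv k (\<lambda>x. f x + g x) = (\<lambda>x. vderiv k f x + vderiv k g x)"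
  using assms
proof (induction k)
  case 0 then show ?case by simp
next
  case (Suc k)
  have IH: "vderiv k (\<lambda>x. f x + g x) = (\<lambda>x. vderiv k f x + vderiv k g x)"
    using Suc by auto
  show ?case
  proof
    fix x
    have "((\<lambda>x. vderiv k f x + vderiv k g x) has_vector_derivative
          (vderiv (Suc k) f x + vderiv (Suc k) g x)) (at x)"
      using Suc.prems[of k x] by (auto intro!: has_vector_derivative_add simp: vector_derivative_works[symmetric])
    then show "vderiv (Suc k) (\<lambda>x. f x + g x) x = vderiv (Suc k) f x + vderiv (Suc k) g x"
      by (simp add: IH vector_derivative_at)
  qed
qed

lemma smooth_add: "smooth f \<Longrightarrow> smooth g \<Longrightarrow> smooth (\<lambda>x. f x + g x)"
  unfolding smooth_def
  by (subst vderiv_add) (auto intro: differentiable_add)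

lemma smooth_coind:
  assumes "\<And>f. f \<in> S \<Longrightarrow> (\<forall>x. f differentiable at x) \<and> vderiv 1 f \<in> S" "f \<in> S"
  shows "smooth f"
proof -
  have "\<forall>f\<in>S. \<forall>x. vderiv k f differentiable at x" for k
  proof (induction k)
    case 0 then show ?case using assms(1) by auto
  next
    case (Suc k) then show ?case using assms(1) by (simp only: vderiv_Suc') blast
  qed
  then show ?thesis using assms(2) unfolding smooth_def by blast
qed

lemma smooth_linear:
  assumes L: "bounded_linear L" and f: "smooth f"
  shows "smooth (\<lambda>x. L (f x))"
proof (rule smooth_coind[where S="{(\<lambda>x. L (f x)) | f. smooth f}"])
  fix h assume "h \<in> {(\<lambda>x. L (f x)) | f. smooth f}"
  then obtain f where h: "h = (\<lambda>x. L (f x))" and f: "smooth f" by blast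
  have d: "(h has_vector_derivative L (vderiv 1 f x)) (at x)" for x
    unfolding h by (rule bounded_linear.has_vector_derivative[OF L smooth_has_deriv[OF f]])
  have "vderiv 1 h = (\<lambda>x. L (vderiv 1 f x))" by (rule vderiv1_eq[OF d])
  then show "(\<forall>x. h differentiable at x) \<and> vderiv 1 h \<in> {(\<lambda>x. L (f x)) | f. smooth f}"
    using d smooth_D[OF f] by (auto intro: differentiableI_vector)
qed (use f in auto)

lemma smooth_bilinear:
  fixes B :: "'a::real_normed_vector \<Rightarrow> 'b::real_normed_vector \<Rightarrow> 'c::real_normed_vector"
    and f :: "real \<Rightarrow> 'a" and g :: "real \<Rightarrow> 'b"
  assumes B: "bounded_bilinear B" and f: "smooth f" and g: "smooth g"
  shows "smooth (\<lambda>x. B (f x) (g x))"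
proof -
  have "\<forall>(f::real\<Rightarrow>'a) (g::real\<Rightarrow>'b). smooth f \<longrightarrow> smooth g \<longrightarrow> (\<forall>x. vderiv k (\<lambda>x. B (f x) (g x)) differentiable at x)" for k
  proof (induction k rule: less_induct)
    case (less k)
    show ?case
    proof (cases k)
      case 0
      then show ?thesis
        by (auto intro!: differentiableI_vector bounded_bilinear.has_vector_derivative[OF B] smooth_has_deriv)
    next
      case (Suc m)
      show ?thesis
      proof (intro allI impI)
        fix f :: "real \<Rightarrow> 'a" and g :: "real \<Rightarrow> 'b" and x assume f: "smooth f" and g: "smooth g"
        have d: "((\<lambda>x. B (f x) (g x)) has_vector_derivative
                  B (f x) (vderiv 1 g x) + B (vderiv 1 f x) (g x)) (at x)" for x
          by (rule bounded_bilinear.has_vector_derivative[OF B smooth_has_deriv[OF f] smooth_has_deriv[OF g]])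
        have Df: "smooth (vderiv 1 f)" and Dg: "smooth (vderiv 1 g)" using f g smooth_D by blast+
        have h1: "vderiv j (\<lambda>x. B (f x) (vderiv 1 g x)) differentiable at y" if "j \<le> m" for j y
        proof -
          have "j < k" using that Suc by simp
          from less.IH[OF this] show ?thesis using f Dg by blast
        qed
        have h2: "vderiv j (\<lambda>x. B (vderiv 1 f x) (g x)) differentiable at y" if "j \<le> m" for j y
        proof -
          have "j < k" using that Suc by simp
          from less.IH[OF this] show ?thesis using Df g by blast
        qed
        have e: "vderiv (Suc m) (\<lambda>x. B (f x) (g x)) =
             vderiv m (\<lambda>x. B (f x) (vderiv 1 g x) + B (vderiv 1 f x) (g x))"
          by (simp only: vderiv_Suc' vderiv1_eq[OF d])
        also have "\<dots> = (\<lambda>x. vderiv m (\<lambda>x. B (f x) (vderiv 1 g x)) x + vderiv m (\<lambda>x. B (vderiv 1 f x) (g x)) x)"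
          using h1 h2 by (intro vderiv_add) auto
        finally show "vderiv k (\<lambda>x. B (f x) (g x)) differentiable at x"
          using h1 h2 Suc by (auto intro!: differentiable_add)
      qed
    qed
  qed
  then show ?thesis using f g unfolding smooth_def by blast
qed



lemma cscaleR: "r *\<^sub>R (z::complex) = complex_of_real r * z"
  by (simp add: scaleR_conv_of_real)

lemma mm_bilinear: "bilinear ((**) :: complex^'n^'n \<Rightarrow> complex^'n^'n \<Rightarrow> complex^'n^'n)"
  unfolding bilinear_def
  by (auto intro!: linearI simp: matrix_matrix_mult_def vec_eq_iff sum_distrib_left
      sum.distrib algebra_simps cscaleR)

lemma mm_bb: "bounded_bilinear ((**) :: complex^'n^'n \<Rightarrow> complex^'n^'n \<Rightarrow> complex^'n^'n)"
  using mm_bilinear bilinear_conv_bounded_bilinear by blast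

lemmas mm_add_left = bounded_bilinear.add_left[OF mm_bb]
lemmas mm_add_right = bounded_bilinear.add_right[OF mm_bb]
lemmas mm_diff_left = bounded_bilinear.diff_left[OF mm_bb]
lemmas mm_diff_right = bounded_bilinear.diff_right[OF mm_bb]
lemmas mm_minus_left = bounded_bilinear.minus_left[OF mm_bb]
lemmas mm_minus_right = bounded_bilinear.minus_right[OF mm_bb]
lemmas mm_zero_left = bounded_bilinear.zero_left[OF mm_bb]
lemmas mm_zero_right = bounded_bilinear.zero_right[OF mm_bb]

lemma bracket_bb: "bounded_bilinear (bracket :: complex^'n^'n \<Rightarrow> complex^'n^'n \<Rightarrow> complex^'n^'n)"
proof -
  have "bilinear (bracket :: complex^'n^'n \<Rightarrow> complex^'n^'n \<Rightarrow> complex^'n^'n)"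
    unfolding bilinear_def bracket_def
    by (auto intro!: linearI simp: matrix_matrix_mult_def vec_eq_iff sum_distrib_left
      sum.distrib algebra_simps cscaleR sum_subtractf)
  then show ?thesis using bilinear_conv_bounded_bilinear by blast
qed

lemma cadj_bl: "bounded_linear (cadj :: complex^'n^'n \<Rightarrow> complex^'n^'n)"
proof -
  have "linear (cadj :: complex^'n^'n \<Rightarrow> complex^'n^'n)"
    by (auto intro!: linearI simp: cadj_def vec_eq_iff cscaleR)
  then show ?thesis using linear_conv_bounded_linear by blast
qed

lemma cadj_nth: "cadj A $ i $ j = cnj (A $ j $ i)"
  by (simp add: cadj_def)

lemma cadj_cadj[simp]: "cadj (cadj A) = (A::complex^'n^'n)"
  by (simp add: cadj_def vec_eq_iff)

lemma cadj_mult: "cadj (A ** B) = cadj B ** cadj (A::complex^'n^'n)"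
  by (simp add: cadj_def vec_eq_iff matrix_matrix_mult_def mult.commute)

lemma cadj_diff: "cadj (A - B) = cadj A - cadj (B::complex^'n^'n)"
  by (simp add: cadj_def vec_eq_iff)

lemma cadj_add: "cadj (A + B) = cadj A + cadj (B::complex^'n^'n)"
  by (simp add: cadj_def vec_eq_iff)

lemma cadj_minus: "cadj (- A) = - cadj (A::complex^'n^'n)"
  by (simp add: cadj_def vec_eq_iff)

lemma cadj_mat1[simp]: "cadj (mat 1 :: complex^'n^'n) = mat 1"
  by (simp add: cadj_def vec_eq_iff mat_def)

lemma unitary_right: "unitary g \<Longrightarrow> g ** cadj g = mat (1::complex)"
  unfolding unitary_def using matrix_left_right_inverse by blast

lemma unitary_inv: "unitary g \<Longrightarrow> matrix_inv g = cadj (g :: complex^'n^'n)"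
proof -
  assume u: "unitary g"
  have l: "cadj g ** g = mat 1" using u unfolding unitary_def .
  have r: "g ** cadj g = mat 1" using unitary_right[OF u] .
  show ?thesis unfolding matrix_inv_def
  proof (rule some_equality)
    show "g ** cadj g = mat 1 \<and> cadj g ** g = mat 1" using l r by simp
  next
    fix A assume "g ** A = mat 1 \<and> A ** g = mat 1"
    then have "A ** g = mat 1" by simp
    then have "(A ** g) ** cadj g = cadj g" by simp
    then show "A = cadj g" by (simp add: matrix_mul_assoc[symmetric] r)
  qed
qed

lemma unitary_entry: assumes "unitary (g :: complex^'n^'n)" shows "norm (g $ i $ j) \<le> 1"
proof -
  have "(cadj g ** g) $ j $ j = 1" using assms unfolding unitary_def by (simp add: mat_def)
  then have "(\<Sum>k\<in>UNIV. cnj (g$k$j) * g$k$j) = 1"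
    by (simp add: matrix_matrix_mult_def cadj_def)
  moreover have "(\<Sum>k\<in>UNIV. complex_of_real ((cmod (g$k$j))^2)) = (\<Sum>k\<in>UNIV. cnj (g$k$j) * g$k$j)"
  proof (intro sum.cong refl)
    fix k show "complex_of_real ((cmod (g$k$j))^2) = cnj (g$k$j) * g$k$j"
      using complex_norm_square[of "g$k$j"] by (simp add: mult.commute)
  qed
  ultimately have "(\<Sum>k\<in>UNIV. complex_of_real ((cmod (g$k$j))^2)) = 1" by simp
  then have s: "(\<Sum>k\<in>UNIV. (cmod (g$k$j))^2) = 1"
    by (metis of_real_eq_1_iff of_real_sum)
  have "(cmod (g$i$j))^2 \<le> (\<Sum>k\<in>UNIV. (cmod (g$k$j))^2)"
    by (rule member_le_sum) auto
  then have "(cmod (g$i$j))^2 \<le> 1" using s by simp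
  then show ?thesis by (simp add: power_le_one_iff abs_le_square_iff)
qed

lemma norm_le_sum_vec: "norm (x :: 'a::real_normed_vector^'n) \<le> (\<Sum>i\<in>UNIV. norm (x $ i))"
  unfolding norm_vec_def by (rule L2_set_le_sum) auto

lemma norm_mat_le_entries:
  assumes "\<And>i j. norm ((x :: complex^'n^'n) $ i $ j) \<le> c"
  shows "norm x \<le> real (CARD('n)) * real (CARD('n)) * c"
proof -
  have "norm x \<le> (\<Sum>i\<in>UNIV. norm (x $ i))" by (rule norm_le_sum_vec)
  also have "\<dots> \<le> (\<Sum>i\<in>(UNIV::'n set). (\<Sum>j\<in>(UNIV::'n set). c))"
    by (intro sum_mono order_trans[OF norm_le_sum_vec] assms)
  also have "\<dots> = real (CARD('n)) * real (CARD('n)) * c" by simp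
  finally show ?thesis .
qed

lemma unitary_norm: assumes "unitary (g :: complex^'n^'n)" shows "norm g \<le> real (CARD('n)) * real (CARD('n))"
proof -
  have "norm g \<le> real (CARD('n)) * real (CARD('n)) * 1"
    by (rule norm_mat_le_entries) (rule unitary_entry[OF assms])
  then show ?thesis by simp
qed

lemma unitary_norm_cadj: assumes "unitary (g :: complex^'n^'n)" shows "norm (cadj g) \<le> real (CARD('n)) * real (CARD('n))"
proof -
  have "norm (cadj g) \<le> real (CARD('n)) * real (CARD('n)) * 1"
    by (rule norm_mat_le_entries) (simp add: cadj_nth unitary_entry[OF assms])
  then show ?thesis by simp
qed

lemma un_iff: "(x :: complex^'n^'n) \<in> un \<longleftrightarrow> (\<forall>i j. cnj (x $ j $ i) = - x $ i $ j)"
  by (auto simp: un_def cadj_def vec_eq_iff)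

lemma bracket_un: "x \<in> un \<Longrightarrow> y \<in> un \<Longrightarrow> bracket x y \<in> (un :: (complex^'n^'n) set)"
  unfolding un_def bracket_def
  by (simp add: cadj_diff cadj_mult mm_minus_left mm_minus_right)



definition msk :: "complex^'n^'n \<Rightarrow> complex^'n^'n \<Rightarrow> complex^'n^'n" where
  "msk a x = (\<chi> i j. if a$i$i = a$j$j then x$i$j else 0)"

lemma msk_nth: "msk a x $ i $ j = (if a$i$i = a$j$j then x$i$j else 0)"
  by (simp add: msk_def)

lemma msk_bl: "bounded_linear (msk a)"
proof -
  have "linear (msk a)"
    by (auto intro!: linearI simp: msk_def vec_eq_iff)
  then show ?thesis using linear_conv_bounded_linear by blast
qed

lemma msk_mask[simp]: "msk a (msk a x) = msk a x"
  by (simp add: msk_def vec_eq_iff)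

lemma msk_add: "msk a (x + y) = msk a x + msk a y"
  by (simp add: msk_def vec_eq_iff)

lemma msk_diff: "msk a (x - y) = msk a x - msk a y"
  by (simp add: msk_def vec_eq_iff)

lemma msk_minus: "msk a (- x) = - msk a x"
  by (simp add: msk_def vec_eq_iff)

lemma msk_zero[simp]: "msk a 0 = 0"
  by (simp add: msk_def vec_eq_iff)

lemma msk_zero_iff: "msk a x = 0 \<longleftrightarrow> (\<forall>i j. a$i$i = a$j$j \<longrightarrow> x$i$j = 0)"
  by (auto simp: msk_def vec_eq_iff)

lemma msk_id_iff: "msk a x = x \<longleftrightarrow> (\<forall>i j. a$i$i \<noteq> a$j$j \<longrightarrow> x$i$j = 0)"
  by (auto simp: msk_def vec_eq_iff)

lemma msk_un: "x \<in> un \<Longrightarrow> msk a x \<in> un"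
  by (auto simp: un_iff msk_nth)

lemma un_diff: "x \<in> un \<Longrightarrow> y \<in> un \<Longrightarrow> x - y \<in> (un :: (complex^'n^'n) set)"
  by (auto simp: un_iff)

lemma un_add: "x \<in> un \<Longrightarrow> y \<in> un \<Longrightarrow> x + y \<in> (un :: (complex^'n^'n) set)"
  by (auto simp: un_iff)

lemma un_minus: "x \<in> un \<Longrightarrow> - x \<in> (un :: (complex^'n^'n) set)"
  by (auto simp: un_iff)

lemma un_zero: "0 \<in> (un :: (complex^'n^'n) set)"
  by (auto simp: un_iff)

lemma diag_mult_right:
  assumes "is_diag a" shows "(x ** a) $ i $ j = x$i$j * a$j$j"
proof -
  have "(x ** a) $ i $ j = (\<Sum>k\<in>UNIV. x$i$k * a$k$j)"
    by (simp add: matrix_matrix_mult_def)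
  also have "\<dots> = (\<Sum>k\<in>UNIV. if k = j then x$i$j * a$j$j else 0)"
    using assms unfolding is_diag_def by (intro sum.cong) auto
  finally show ?thesis by simp
qed

lemma diag_mult_left:
  assumes "is_diag a" shows "(a ** x) $ i $ j = a$i$i * x$i$j"
proof -
  have "(a ** x) $ i $ j = (\<Sum>k\<in>UNIV. a$i$k * x$k$j)"
    by (simp add: matrix_matrix_mult_def)
  also have "\<dots> = (\<Sum>k\<in>UNIV. if k = i then a$i$i * x$i$j else 0)"
    using assms unfolding is_diag_def by (intro sum.cong) auto
  finally show ?thesis by simp
qed

lemma cent_iff:
  assumes "is_diag a" shows "x \<in> cent a \<longleftrightarrow> x \<in> un \<and> msk a x = x"
proof -
  have "x ** a = a ** x \<longleftrightarrow> (\<forall>i j. x$i$j * a$j$j = a$i$i * x$i$j)"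
    by (simp add: vec_eq_iff diag_mult_right[OF assms] diag_mult_left[OF assms])
  also have "\<dots> \<longleftrightarrow> (\<forall>i j. a$i$i \<noteq> a$j$j \<longrightarrow> x$i$j = 0)"
    by (auto simp: algebra_simps) (metis mult_right_cancel)
  finally show ?thesis unfolding cent_def msk_id_iff by blast
qed

lemma ip_expand: "ip y z = - Re (\<Sum>i\<in>UNIV. \<Sum>k\<in>UNIV. y$i$k * z$k$i)"
  by (simp add: ip_def mtrace_def matrix_matrix_mult_def)

lemma ip_add_left: "ip (x + y) z = ip x z + ip y z"
  by (simp add: ip_expand algebra_simps sum.distrib)

lemma perp_iff:
  assumes "is_diag a" shows "y \<in> cent_perp a \<longleftrightarrow> y \<in> un \<and> msk a y = 0"
proof
  assume "y \<in> un \<and> msk a y = 0"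
  then have yu: "y \<in> un" and y0: "\<And>i k. a$i$i = a$k$k \<Longrightarrow> y$i$k = 0"
    by (auto simp: msk_zero_iff)
  have "ip y z = 0" if z: "z \<in> cent a" for z
  proof -
    have z0: "\<And>i k. a$i$i \<noteq> a$k$k \<Longrightarrow> z$i$k = 0"
      using z cent_iff[OF assms] msk_id_iff by metis
    have "(\<Sum>i\<in>UNIV. \<Sum>k\<in>UNIV. y$i$k * z$k$i) = 0"
      by (intro sum.neutral ballI) (metis mult_eq_0_iff y0 z0)
    then show ?thesis by (simp add: ip_expand)
  qed
  then show "y \<in> cent_perp a" using yu unfolding cent_perp_def by blast
next
  assume yp: "y \<in> cent_perp a"
  then have yu: "y \<in> un" by (simp add: cent_perp_def)
  have mc: "msk a y \<in> cent a" using cent_iff[OF assms] msk_un[OF yu] by simp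
  have "ip y (msk a y) = 0" using yp mc unfolding cent_perp_def by blast
  moreover have "ip y (msk a y) = (\<Sum>i\<in>UNIV. \<Sum>k\<in>UNIV. if a$i$i = a$k$k then (cmod (y$i$k))^2 else 0)"
  proof -
    have "y$i$k * msk a y $ k $ i = - complex_of_real (if a$i$i = a$k$k then (cmod (y$i$k))^2 else 0)" for i k
    proof -
      have "y$k$i = - cnj (y$i$k)" using yu unfolding un_iff by (metis minus_minus)
      then show ?thesis using complex_norm_square[of "y$i$k"] by (auto simp: msk_nth)
    qed
    then show ?thesis unfolding ip_expand by (simp add: sum_negf)
  qed
  ultimately have s: "(\<Sum>i\<in>UNIV. \<Sum>k\<in>UNIV. if a$i$i = a$k$k then (cmod (y$i$k))^2 else 0) = 0" by simp
  have "(\<Sum>k\<in>UNIV. if a$i$i = a$k$k then (cmod (y$i$k))^2 else 0) = 0" for i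
    using s by (subst (asm) sum_nonneg_eq_0_iff) (auto intro!: sum_nonneg)
  then have "(if a$i$i = a$k$k then (cmod (y$i$k))^2 else 0) = 0" for i k
    by (subst (asm) sum_nonneg_eq_0_iff) auto
  then have "msk a y = 0" unfolding msk_zero_iff by (metis norm_eq_zero power_eq_0_iff)
  then show "y \<in> un \<and> msk a y = 0" using yu by simp
qed

lemma cent_diff: "is_diag a \<Longrightarrow> x \<in> cent a \<Longrightarrow> y \<in> cent a \<Longrightarrow> x - y \<in> cent a"
  by (simp add: cent_iff un_diff msk_diff)

lemma proj_eq:
  assumes d: "is_diag a" and x: "x \<in> un" shows "proj_a a x = msk a x"
  unfolding proj_a_def
proof (rule the_equality)
  have mc: "msk a x \<in> cent a" using cent_iff[OF d] msk_un[OF x] by simp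
  have "x - msk a x \<in> cent_perp a"
    using perp_iff[OF d] un_diff[OF x msk_un[OF x]] msk_diff[of a x "msk a x"] by simp
  then show "msk a x \<in> cent a \<and> (\<forall>z\<in>cent a. ip (x - msk a x) z = 0)"
    using mc unfolding cent_perp_def by blast
  fix y assume y: "y \<in> cent a \<and> (\<forall>z\<in>cent a. ip (x - y) z = 0)"
  let ?d = "msk a x - y"
  have dc: "?d \<in> cent a" using cent_diff[OF d mc] y by blast
  have "ip ?d z = 0" if z: "z \<in> cent a" for z
  proof -
    have "x - y = (x - msk a x) + ?d" by simp
    then have "ip (x - y) z = ip (x - msk a x) z + ip ?d z" by (simp add: ip_add_left[symmetric])
    moreover have "ip (x - msk a x) z = 0" using \<open>x - msk a x \<in> cent_perp a\<close> z
      unfolding cent_perp_def by blast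
    ultimately show ?thesis using y z by simp
  qed
  then have "?d \<in> cent_perp a" using dc unfolding cent_perp_def cent_def by blast
  then have "msk a ?d = 0" using perp_iff[OF d] by blast
  moreover have "msk a ?d = ?d" using dc cent_iff[OF d] by blast
  ultimately show "y = msk a x" by simp
qed

lemma bracket_perp_cent:
  assumes d: "is_diag a" and u: "u \<in> cent_perp a" and w: "w \<in> cent a"
  shows "msk a (bracket u w) = 0"
proof -
  have u0: "\<And>i k. a$i$i = a$k$k \<Longrightarrow> u$i$k = 0"
    using u perp_iff[OF d] msk_zero_iff by metis
  have w0: "\<And>i k. a$i$i \<noteq> a$k$k \<Longrightarrow> w$i$k = 0"
    using w cent_iff[OF d] msk_id_iff by metis
  have "bracket u w $ i $ j = 0" if "a$i$i = a$j$j" for i j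
  proof -
    have "(\<Sum>k\<in>UNIV. u$i$k * w$k$j) = 0"
      by (intro sum.neutral ballI) (metis mult_eq_0_iff u0 w0 that)
    moreover have "(\<Sum>k\<in>UNIV. w$i$k * u$k$j) = 0"
      by (intro sum.neutral ballI) (metis mult_eq_0_iff u0 w0 that)
    ultimately show ?thesis by (simp add: bracket_def matrix_matrix_mult_def)
  qed
  then show ?thesis unfolding msk_zero_iff by blast
qed

definition Ka :: "complex^'n^'n \<Rightarrow> real" where
  "Ka a = (\<Sum>i\<in>UNIV. \<Sum>j\<in>UNIV. if a$i$i = a$j$j then 0 else 1 / cmod (a$j$j - a$i$i))"

lemma norm_entry_le: "norm ((x::complex^'n^'n) $ i $ j) \<le> norm x"
  using Finite_Cartesian_Product.norm_nth_le[where x="x$i" and i=j] Finite_Cartesian_Product.norm_nth_le[where x=x and i=i] by linarith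

lemma bracket_perp_bound:
  assumes d: "is_diag a" and u: "u \<in> cent_perp a"
  shows "norm u \<le> Ka a * norm (bracket u a)"
proof -
  have u0: "\<And>i k. a$i$i = a$k$k \<Longrightarrow> u$i$k = 0"
    using u perp_iff[OF d] msk_zero_iff by metis
  have be: "bracket u a $ i $ j = u$i$j * (a$j$j - a$i$i)" for i j
    by (simp add: bracket_def diag_mult_left[OF d] diag_mult_right[OF d] algebra_simps)
  have e: "norm (u$i$j) \<le> (if a$i$i = a$j$j then 0 else 1 / cmod (a$j$j - a$i$i)) * norm (bracket u a)" for i j
  proof (cases "a$i$i = a$j$j")
    case True then show ?thesis using u0 by simp
  next
    case False
    then have pos: "cmod (a$j$j - a$i$i) > 0" by simp
    have "norm (u$i$j) * cmod (a$j$j - a$i$i) = norm (bracket u a $ i $ j)"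
      by (simp add: be norm_mult)
    also have "\<dots> \<le> norm (bracket u a)" by (rule norm_entry_le)
    finally show ?thesis using False pos by (simp add: field_simps)
  qed
  have "norm u \<le> (\<Sum>i\<in>UNIV. norm (u $ i))" by (rule norm_le_sum_vec)
  also have "\<dots> \<le> (\<Sum>i\<in>UNIV. \<Sum>j\<in>UNIV. (if a$i$i = a$j$j then 0 else 1 / cmod (a$j$j - a$i$i)) * norm (bracket u a))"
    by (intro sum_mono order_trans[OF norm_le_sum_vec] e)
  also have "\<dots> = Ka a * norm (bracket u a)"
    by (simp add: Ka_def sum_distrib_right)
  finally show ?thesis .
qed



lemma arctan_integrable: "integrable lborel (\<lambda>y::real. 1 / (1 + y^2))"
proof -
  have "set_integrable lborel (einterval (-\<infinity>) \<infinity>) (\<lambda>y::real. 1 / (1 + y^2))"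
  proof (rule interval_integral_FTC_nonneg(1)[where F=arctan and A="- (pi/2)" and B="pi/2"])
    show "(-\<infinity>::ereal) < \<infinity>" by simp
    fix x :: real
    show "DERIV arctan x :> 1 / (1 + x^2)"
      using DERIV_arctan[of x] by (simp add: divide_inverse)
    have "1 + x^2 \<noteq> 0" using zero_le_power2[of x] by linarith
    then show "isCont (\<lambda>y::real. 1 / (1 + y^2)) x"
      by (intro continuous_intros) (auto simp: add_nonneg_eq_0_iff)
  next
    show "AE x in lborel. (-\<infinity>::ereal) < ereal x \<longrightarrow> ereal x < \<infinity> \<longrightarrow> 0 \<le> 1 / (1 + x^2)"
      by (intro AE_I2) simp
    show "((arctan \<circ> real_of_ereal) \<longlongrightarrow> - (pi / 2)) (at_right (-\<infinity>))"
      by (simp add: ereal_tendsto_simps1 tendsto_arctan_at_bot)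
    show "((arctan \<circ> real_of_ereal) \<longlongrightarrow> pi / 2) (at_left \<infinity>)"
      by (simp add: ereal_tendsto_simps1 tendsto_arctan_at_top)
  qed
  then show ?thesis by (simp add: set_integrable_def)
qed

lemma improper_integral:
  fixes p :: "real \<Rightarrow> 'a::euclidean_space"
  assumes cont: "continuous_on UNIV p" and bnd: "\<And>y. norm (p y) \<le> C / (1 + y^2)"
  shows "\<And>x. ((\<lambda>x. integral {..x} p) has_vector_derivative p x) (at x)"
    and "((\<lambda>x. integral {..x} p) \<longlongrightarrow> 0) at_bot"
    and "\<And>x. p integrable_on {..x}"
proof -
  have pint: "integrable lborel p"
  proof (rule Bochner_Integration.integrable_bound)
    show "integrable lborel (\<lambda>y::real. C * (1 / (1 + y^2)))"
      using arctan_integrable by (rule integrable_mult_right)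
    show "p \<in> borel_measurable lborel"
      using borel_measurable_continuous_onI[OF cont] by simp
    show "AE x in lborel. norm (p x) \<le> norm (C * (1 / (1 + x^2)))"
    proof (intro AE_I2)
      fix x :: real
      have pos: "0 < 1 + x^2" using zero_le_power2[of x] by linarith
      have "C / (1 + x^2) \<le> \<bar>C\<bar> / (1 + x^2)" using pos by (intro divide_right_mono) auto
      then show "norm (p x) \<le> norm (C * (1 / (1 + x^2)))"
        using bnd[of x] by simp
    qed
  qed
  have si: "set_integrable lborel A p" if "A \<in> sets lborel" for A
    unfolding set_integrable_def using that pint by (rule integrable_mult_indicator)
  have hk: "p integrable_on A" "(LINT x:A|lborel. p x) = integral A p" if "A \<in> sets lborel" for A
    using set_borel_integral_eq_integral[OF si[OF that]] by auto
  show pi: "p integrable_on {..x}" for x using hk by simp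
  have split: "integral {..b} p = integral {..a} p + integral {a..b} p" if "a \<le> b" for a b
  proof -
    have "(p has_integral (integral {..a} p + integral {a..b} p)) ({..a} \<union> {a..b})"
    proof (rule has_integral_Un)
      show "(p has_integral integral {..a} p) {..a}" using pi by (simp add: integrable_integral)
      show "(p has_integral integral {a..b} p) {a..b}" using hk(1)[of "{a..b}"] by (simp add: integrable_integral)
      have "{..a} \<inter> {a..b} = {a}" using that by auto
      then show "negligible ({..a} \<inter> {a..b})" by simp
    qed
    moreover have "{..a} \<union> {a..b} = {..b}" using that by auto
    ultimately show ?thesis by (simp add: integral_unique)
  qed
  show "((\<lambda>x. integral {..x} p) \<longlongrightarrow> 0) at_bot"
  proof -
    have "((\<lambda>a. set_lebesgue_integral lborel {a..0} p) \<longlongrightarrow> set_lebesgue_integral lborel {..0} p) at_bot"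
      by (rule tendsto_set_lebesgue_integral_at_bot) (auto intro: si)
    then have "((\<lambda>a. integral {a..0} p) \<longlongrightarrow> integral {..0} p) at_bot"
      using hk(2) by simp
    then have "((\<lambda>a. integral {..0} p - integral {a..0} p) \<longlongrightarrow> integral {..0} p - integral {..0} p) at_bot"
      by (intro tendsto_intros)
    then have l: "((\<lambda>a. integral {..0} p - integral {a..0} p) \<longlongrightarrow> 0) at_bot" by simp
    have "eventually (\<lambda>a. integral {..0} p - integral {a..0} p = integral {..a} p) at_bot"
      using eventually_le_at_bot[of 0] by eventually_elim (simp add: split)
    then show ?thesis using l by (rule Lim_transform_eventually[rotated])
  qed
  show "((\<lambda>x. integral {..x} p) has_vector_derivative p x) (at x)" for x
  proof -
    let ?c = "x - 1" and ?e = "x + 1"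
    have "((\<lambda>u. integral {?c..u} p) has_vector_derivative p x) (at x within {?c..?e})"
      by (rule integral_has_vector_derivative) (auto intro: continuous_on_subset[OF cont])
    then have "((\<lambda>u. integral {?c..u} p) has_vector_derivative p x) (at x)"
      by (simp add: at_within_Icc_at)
    then have d: "((\<lambda>u. integral {..?c} p + integral {?c..u} p) has_vector_derivative p x) (at x)"
      using has_vector_derivative_add[OF has_vector_derivative_const] by fastforce
    show ?thesis
    proof (rule has_vector_derivative_transform_within_open[OF d, of "{?c<..}"])
      show "open {?c<..}" by simp
      show "x \<in> {?c<..}" by simp
      fix y assume "y \<in> {?c<..}"
      then show "integral {..?c} p + integral {?c..y} p = integral {..y} p"
        using split[of ?c y] by simp
    qed
  qed
qed



lemma deriv_in:
  assumes L: "bounded_linear L" and z: "\<And>t. L (f t) = 0"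
    and d: "(f has_vector_derivative f') (at x)"
  shows "L f' = 0"
proof -
  have "((\<lambda>t. L (f t)) has_vector_derivative L f') (at x)"
    by (rule bounded_linear.has_vector_derivative[OF L d])
  moreover have "((\<lambda>t. L (f t)) has_vector_derivative 0) (at x)"
    using z by simp
  ultimately show ?thesis by (rule vector_derivative_unique_at)
qed

lemma bl_cadj_plus: "bounded_linear (\<lambda>X::complex^'n^'n. cadj X + X)"
  by (intro bounded_linear_add cadj_bl bounded_linear_ident)

lemma bl_id_mask: "bounded_linear (\<lambda>X::complex^'n^'n. X - msk a X)"
  by (intro bounded_linear_sub msk_bl bounded_linear_ident)

lemma deriv_un:
  assumes "\<And>t. f t \<in> un" "(f has_vector_derivative f') (at x)"
  shows "f' \<in> (un :: (complex^'n^'n) set)"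
proof -
  have "cadj f' + f' = 0"
    using deriv_in[OF bl_cadj_plus _ assms(2)] assms(1) unfolding un_def by simp
  then show ?thesis unfolding un_def by (simp add: eq_neg_iff_add_eq_0)
qed

lemma deriv_mask0:
  assumes "\<And>t. msk a (f t) = 0" "(f has_vector_derivative f') (at x)"
  shows "msk a f' = 0"
  using deriv_in[OF msk_bl _ assms(2)] assms(1) by simp

lemma deriv_maskid:
  assumes "\<And>t. msk a (f t) = f t" "(f has_vector_derivative f') (at x)"
  shows "msk a f' = f'"
  using deriv_in[OF bl_id_mask _ assms(2), of a] assms(1) by simp



lemma vderiv1_at: "(f has_vector_derivative f') (at x) \<Longrightarrow> vderiv 1 f x = f'"
  by (simp add: vector_derivative_at)

declare vderiv.simps(2)[simp del]

theorem proposition3p9: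
  fixes a :: "complex^'n^'n" and \<gamma> g v :: "real \<Rightarrow> complex^'n^'n"
  assumes a_un: "a \<in> un" and a_diag: "is_diag a"
    and gamma: "\<gamma> \<in> Ca a"
    and g_smooth: "smooth g" and g_unitary: "\<forall>x. unitary (g x)"
    and g_conj: "\<forall>x. \<gamma> x = g x ** a ** matrix_inv (g x)"
    and g_lim: "(g \<longlongrightarrow> mat 1) at_bot"
    and g_gauge: "\<forall>x. matrix_inv (g x) ** vderiv 1 g x \<in> cent_perp a"
    and v_schwartz: "schwartz v" and v_perp: "\<forall>x. v x \<in> cent_perp a"
  shows "(\<exists>!\<zeta>. smooth \<zeta>
            \<and> (\<forall>x. \<zeta> x \<in> {g x ** y ** matrix_inv (g x) | y. y \<in> cent a})
            \<and> (\<forall>x. vderiv 1 (\<lambda>t. g t ** v t ** matrix_inv (g t) + \<zeta> t) x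
                   \<in> {g x ** y ** matrix_inv (g x) | y. y \<in> cent_perp a})
            \<and> (\<zeta> \<longlongrightarrow> 0) at_bot)
   \<and> (\<forall>\<zeta>. (smooth \<zeta>
            \<and> (\<forall>x. \<zeta> x \<in> {g x ** y ** matrix_inv (g x) | y. y \<in> cent a})
            \<and> (\<forall>x. vderiv 1 (\<lambda>t. g t ** v t ** matrix_inv (g t) + \<zeta> t) x
                   \<in> {g x ** y ** matrix_inv (g x) | y. y \<in> cent_perp a})
            \<and> (\<zeta> \<longlongrightarrow> 0) at_bot)
          \<longrightarrow> (\<forall>x. Lop a g v x = vderiv 1 (\<lambda>t. g t ** v t ** matrix_inv (g t) + \<zeta> t) x))"
proof -
  define Gi where "Gi x = cadj (g x)" for x
  have minv: "matrix_inv (g x) = Gi x" for x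
    using unitary_inv g_unitary unfolding Gi_def by blast
  have GiG: "Gi x ** g x = mat 1" for x
    using g_unitary unfolding Gi_def unitary_def by blast
  have GGi: "g x ** Gi x = mat 1" for x
    using g_unitary unitary_right unfolding Gi_def by blast
  have cancel: "Gi x ** (g x ** X ** Gi x) ** g x = X" for x X
  proof -
    have "Gi x ** (g x ** X ** Gi x) ** g x = (Gi x ** g x) ** X ** (Gi x ** g x)"
      by (simp add: matrix_mul_assoc)
    then show ?thesis by (simp add: GiG)
  qed
  define u where "u x = Gi x ** vderiv 1 g x" for x
  have U_eq: "(\<lambda>y. matrix_inv (g y) ** vderiv 1 g y) = u"
    by (rule ext) (simp only: u_def minv)
  have u_perp: "u x \<in> cent_perp a" for x
    using g_gauge by (simp add: U_eq[symmetric])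
  have u_un: "u x \<in> un" for x
    using u_perp unfolding cent_perp_def by blast
  have gd: "(g has_vector_derivative vderiv 1 g x) (at x)" for x
    by (rule smooth_has_deriv[OF g_smooth])
  have g'_eq: "vderiv 1 g x = g x ** u x" for x
  proof -
    have "g x ** u x = (g x ** Gi x) ** vderiv 1 g x"
      by (simp add: u_def matrix_mul_assoc)
    then show ?thesis by (simp add: GGi)
  qed
  have Gi_smooth: "smooth Gi"
    unfolding Gi_def by (rule smooth_linear[OF cadj_bl g_smooth])
  have Gid: "(Gi has_vector_derivative - (u x ** Gi x)) (at x)" for x
  proof -
    have "((\<lambda>t. cadj (g t)) has_vector_derivative cadj (vderiv 1 g x)) (at x)"
      by (rule bounded_linear.has_vector_derivative[OF cadj_bl gd])
    moreover have "cadj (vderiv 1 g x) = - (u x ** Gi x)"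
      unfolding g'_eq using u_un[of x] by (simp add: cadj_mult un_def Gi_def mm_minus_left)
    ultimately show ?thesis unfolding Gi_def by simp
  qed
  have conj_d: "((\<lambda>t. g t ** y t ** Gi t) has_vector_derivative
                   g x ** (y' + bracket (u x) (y x)) ** Gi x) (at x)"
    if yd: "(y has_vector_derivative y') (at x)" for y y' x
  proof -
    have d1: "((\<lambda>t. g t ** y t) has_vector_derivative g x ** y' + vderiv 1 g x ** y x) (at x)"
      by (rule bounded_bilinear.has_vector_derivative[OF mm_bb gd yd])
    have d2: "((\<lambda>t. g t ** y t ** Gi t) has_vector_derivative
         g x ** y x ** (- (u x ** Gi x)) + (g x ** y' + vderiv 1 g x ** y x) ** Gi x) (at x)"
      by (rule bounded_bilinear.has_vector_derivative[OF mm_bb d1 Gid])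
    have "g x ** y x ** (- (u x ** Gi x)) + (g x ** y' + vderiv 1 g x ** y x) ** Gi x
          = g x ** (y' + bracket (u x) (y x)) ** Gi x"
      unfolding g'_eq by (simp add: bracket_def mm_add_left mm_add_right mm_diff_left mm_diff_right
          mm_minus_left mm_minus_right matrix_mul_assoc)
    then show ?thesis using d2 by simp
  qed

  have v_smooth: "smooth v" using v_schwartz unfolding schwartz_def by blast
  have vd: "(v has_vector_derivative vderiv 1 v x) (at x)" for x
    by (rule smooth_has_deriv[OF v_smooth])
  have v_un: "v x \<in> un" for x using v_perp unfolding cent_perp_def by blast
  have v_m0: "msk a (v x) = 0" for x using v_perp perp_iff[OF a_diag] by blast
  have v'_un: "vderiv 1 v x \<in> un" for x by (rule deriv_un[OF v_un vd])
  have v'_m0: "msk a (vderiv 1 v x) = 0" for x by (rule deriv_mask0[OF v_m0 vd])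
  have u_smooth: "smooth u"
  proof -
    have "smooth (\<lambda>x. Gi x ** vderiv 1 g x)"
      by (rule smooth_bilinear[OF mm_bb Gi_smooth smooth_D[OF g_smooth]])
    then show ?thesis unfolding u_def[abs_def] .
  qed
  define p where "p x = msk a (bracket (u x) (v x))" for x
  have p_smooth: "smooth p"
    unfolding p_def[abs_def]
    by (rule smooth_linear[OF msk_bl smooth_bilinear[OF bracket_bb u_smooth v_smooth]])
  have br_un: "bracket (u x) (v x) \<in> un" for x by (rule bracket_un[OF u_un v_un])
  have p_un: "p x \<in> un" for x unfolding p_def by (rule msk_un[OF br_un])
  have p_mask: "msk a (p x) = p x" for x unfolding p_def by simp
  have proj_p: "proj_a a (bracket (u x) (v x)) = p x" for x
    unfolding p_def by (rule proj_eq[OF a_diag br_un])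
  have Top_eq: "Top a u v x = integral {..x} p" for x
    unfolding Top_def proj_p by (simp add: p_def[abs_def] proj_p)
  have "\<exists>K>0. \<forall>X. norm (msk a X) \<le> norm (X::complex^'n^'n) * K"
    by (rule bounded_linear.pos_bounded[OF msk_bl])
  then obtain Km where Km: "Km > 0" "\<And>X. norm (msk a X) \<le> norm (X::complex^'n^'n) * Km"
    by blast
  have "\<exists>K>0. \<forall>X Y. norm (bracket X Y) \<le> norm (X::complex^'n^'n) * norm (Y::complex^'n^'n) * K"
    by (rule bounded_bilinear.pos_bounded[OF bracket_bb])
  then obtain Kb where Kb: "Kb > 0" "\<And>X Y. norm (bracket X Y) \<le> norm (X::complex^'n^'n) * norm (Y::complex^'n^'n) * Kb"
    by blast
  have "\<exists>K>0. \<forall>X Y. norm (X ** Y) \<le> norm (X::complex^'n^'n) * norm (Y::complex^'n^'n) * K"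
    by (rule bounded_bilinear.pos_bounded[OF mm_bb])
  then obtain K where K: "K > 0" "\<And>X Y. norm (X ** Y) \<le> norm (X::complex^'n^'n) * norm (Y::complex^'n^'n) * K"
    by blast
  define Cg where "Cg = real (CARD('n)) * real (CARD('n))"
  have gC: "norm (g x) \<le> Cg" for x unfolding Cg_def using unitary_norm g_unitary by blast
  have GiC: "norm (Gi x) \<le> Cg" for x unfolding Cg_def Gi_def using unitary_norm_cadj g_unitary by blast
  have Cg0: "0 \<le> Cg" unfolding Cg_def by simp
  have gam_eq: "\<gamma> = (\<lambda>t. g t ** a ** Gi t)"
    using g_conj minv by auto
  have gam_d: "vderiv 1 \<gamma> x = g x ** bracket (u x) a ** Gi x" for x
  proof -
    have "((\<lambda>t. g t ** (\<lambda>_. a) t ** Gi t) has_vector_derivative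
           g x ** (0 + bracket (u x) ((\<lambda>_. a) x)) ** Gi x) (at x)"
      by (rule conj_d) simp
    then have "((\<lambda>t. g t ** a ** Gi t) has_vector_derivative g x ** bracket (u x) a ** Gi x) (at x)"
      by simp
    then show ?thesis unfolding gam_eq by (rule vderiv1_at)
  qed
  obtain Bgam where Bgam: "\<And>x. norm (vderiv 1 \<gamma> x) \<le> Bgam"
  proof -
    have "schwartz (vderiv 1 \<gamma>)" using gamma unfolding Ca_def by blast
    then have "bounded (range (\<lambda>x. \<bar>x\<bar> ^ 0 * norm (vderiv 0 (vderiv 1 \<gamma>) x)))"
      unfolding schwartz_def by blast
    then obtain B where "\<And>x. norm (\<bar>x\<bar> ^ 0 * norm (vderiv 0 (vderiv 1 \<gamma>) x)) \<le> B"
      unfolding bounded_iff by blast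
    then have "\<And>x. norm (vderiv 1 \<gamma> x) \<le> B" by simp
    then show ?thesis by (rule that)
  qed
  have Bg0: "0 \<le> Bgam" using Bgam[of 0] norm_ge_zero[of "vderiv 1 \<gamma> 0"] by linarith
  define Bu where "Bu = Ka a * (Cg * Bgam * Cg * K * K)"
  have Ka0: "0 \<le> Ka a" unfolding Ka_def by (intro sum_nonneg) auto
  have uB: "norm (u x) \<le> Bu" for x
  proof -
    have "bracket (u x) a = Gi x ** vderiv 1 \<gamma> x ** g x"
      unfolding gam_d cancel ..
    then have "norm (bracket (u x) a) \<le> norm (Gi x ** vderiv 1 \<gamma> x) * norm (g x) * K"
      using K(2) by simp
    also have "\<dots> \<le> (norm (Gi x) * norm (vderiv 1 \<gamma> x) * K) * norm (g x) * K"
      using K by (intro mult_right_mono K(2)) auto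
    also have "\<dots> \<le> (Cg * Bgam * K) * Cg * K"
      using K GiC[of x] gC[of x] Bgam[of x] Cg0 Bg0
      by (intro mult_right_mono mult_mono) auto
    finally have "norm (bracket (u x) a) \<le> Cg * Bgam * Cg * K * K" by (simp add: algebra_simps)
    then show ?thesis unfolding Bu_def
      using bracket_perp_bound[OF a_diag u_perp[of x]] Ka0
      by (meson mult_left_mono order_trans)
  qed
  obtain B0 where B0: "\<And>x. norm (v x) \<le> B0"
  proof -
    have "bounded (range (\<lambda>x. \<bar>x\<bar> ^ 0 * norm (vderiv 0 v x)))"
      using v_schwartz unfolding schwartz_def by blast
    then obtain B where "\<And>x. norm (\<bar>x\<bar> ^ 0 * norm (vderiv 0 v x)) \<le> B"
      unfolding bounded_iff by blast
    then have "\<And>x. norm (v x) \<le> B" by simp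
    then show ?thesis by (rule that)
  qed
  obtain B2 where B2: "\<And>x. x^2 * norm (v x) \<le> B2"
  proof -
    have "bounded (range (\<lambda>x. \<bar>x\<bar> ^ 2 * norm (vderiv 0 v x)))"
      using v_schwartz unfolding schwartz_def by blast
    then obtain B where "\<And>x. norm (\<bar>x\<bar> ^ 2 * norm (vderiv 0 v x)) \<le> B"
      unfolding bounded_iff by blast
    then have "\<And>x. x^2 * norm (v x) \<le> B" by simp
    then show ?thesis by (rule that)
  qed
  have vdec: "norm (v x) \<le> (B0 + B2) / (1 + x^2)" for x
  proof -
    have pos: "0 < 1 + x^2" using zero_le_power2[of x] by linarith
    have "(1 + x^2) * norm (v x) \<le> B0 + B2" using B0[of x] B2[of x] by (simp add: algebra_simps)
    then show ?thesis using pos by (simp add: field_simps)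
  qed
  define Cp where "Cp = Bu * Kb * Km * (B0 + B2)"
  have pB: "norm (p y) \<le> Cp / (1 + y^2)" for y
  proof -
    have pos: "0 < 1 + y^2" using zero_le_power2[of y] by linarith
    have Bu0: "0 \<le> Bu" using uB[of y] norm_ge_zero[of "u y"] by linarith
    have "norm (p y) \<le> norm (bracket (u y) (v y)) * Km" unfolding p_def by (rule Km(2))
    also have "\<dots> \<le> (norm (u y) * norm (v y) * Kb) * Km"
      using Km(1) Kb(2) by (intro mult_right_mono) auto
    also have "\<dots> \<le> (Bu * ((B0 + B2) / (1 + y^2)) * Kb) * Km"
      using Km(1) Kb(1) uB[of y] vdec[of y] Bu0
      by (intro mult_right_mono mult_mono) auto
    also have "\<dots> = Cp / (1 + y^2)" unfolding Cp_def by (simp add: field_simps)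
    finally show ?thesis .
  qed
  define T where "T x = integral {..x} p" for x
  have Td: "(T has_vector_derivative p x) (at x)" for x
    unfolding T_def[abs_def] by (rule improper_integral(1)[OF smooth_continuous[OF p_smooth] pB])
  have Tlim: "(T \<longlongrightarrow> 0) at_bot"
    unfolding T_def[abs_def] by (rule improper_integral(2)[OF smooth_continuous[OF p_smooth] pB])
  have p_int: "p integrable_on {..x}" for x
    by (rule improper_integral(3)[OF smooth_continuous[OF p_smooth] pB])
  have T_smooth: "smooth T" by (rule smooth_deriv[OF Td p_smooth])
  have T_cent: "T x \<in> cent a" for x
  proof -
    have "cadj (T x) = integral {..x} (cadj \<circ> p)"
      unfolding T_def by (rule integral_linear[OF p_int cadj_bl, symmetric])
    also have "\<dots> = integral {..x} (\<lambda>y. - p y)"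
      using p_un unfolding un_def by (simp add: o_def)
    also have "\<dots> = - T x" unfolding T_def by simp
    finally have "T x \<in> un" unfolding un_def by simp
    moreover have "msk a (T x) = T x"
    proof -
      have "msk a (T x) = integral {..x} (msk a \<circ> p)"
        unfolding T_def by (rule integral_linear[OF p_int msk_bl, symmetric])
      also have "\<dots> = T x" unfolding T_def using p_mask by (simp add: o_def)
      finally show ?thesis .
    qed
    ultimately show ?thesis using cent_iff[OF a_diag] by blast
  qed
  have Top_T: "Top a u v x = T x" for x unfolding Top_eq T_def ..

  define w where "w x = - T x" for x
  have wd: "(w has_vector_derivative - p x) (at x)" for x
    unfolding w_def[abs_def] by (intro has_vector_derivative_minus Td)
  have w_smooth: "smooth w"
    unfolding w_def[abs_def] by (rule smooth_linear[OF bounded_linear_minus[OF bounded_linear_ident] T_smooth])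
  have w_cent: "w x \<in> cent a" for x
    using T_cent[of x] cent_iff[OF a_diag] unfolding w_def by (simp add: un_minus msk_minus)
  have w_lim: "(w \<longlongrightarrow> 0) at_bot"
    unfolding w_def[abs_def] using tendsto_minus[OF Tlim] by simp
  have Gi_lim: "(Gi \<longlongrightarrow> mat 1) at_bot"
  proof -
    have "((\<lambda>x. cadj (g x)) \<longlongrightarrow> cadj (mat 1)) at_bot"
      by (rule bounded_linear.tendsto[OF cadj_bl g_lim])
    then show ?thesis unfolding Gi_def[abs_def] by simp
  qed
  define \<zeta>0 where "\<zeta>0 t = g t ** w t ** Gi t" for t
  define Y where "Y x = vderiv 1 v x - p x + bracket (u x) (v x + w x)" for x
  have sum_eq: "(\<lambda>t. g t ** v t ** matrix_inv (g t) + g t ** y t ** Gi t) = (\<lambda>t. g t ** (v t + y t) ** Gi t)" for y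
    by (rule ext) (simp add: minv mm_add_left mm_add_right)
  have Y_perp: "Y x \<in> cent_perp a" for x
  proof -
    have "Y x \<in> un" unfolding Y_def
      by (intro un_add un_diff v'_un p_un bracket_un u_un v_un) (use w_cent cent_def in blast)
    moreover have "msk a (Y x) = 0"
    proof -
      have "msk a (bracket (u x) (w x)) = 0" by (rule bracket_perp_cent[OF a_diag u_perp w_cent])
      moreover have "bracket (u x) (v x + w x) = bracket (u x) (v x) + bracket (u x) (w x)"
        by (rule bounded_bilinear.add_right[OF bracket_bb])
      ultimately show ?thesis unfolding Y_def
        by (simp add: msk_add msk_diff v'_m0 v'_m0[simplified] p_mask p_def[symmetric])
    qed
    ultimately show ?thesis using perp_iff[OF a_diag] by blast
  qed
  have ex_d: "vderiv 1 (\<lambda>t. g t ** v t ** matrix_inv (g t) + \<zeta>0 t) x = g x ** Y x ** Gi x" for x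
  proof -
    have "((\<lambda>t. v t + w t) has_vector_derivative vderiv 1 v x + - p x) (at x)"
      by (intro has_vector_derivative_add vd wd)
    from conj_d[OF this]
    have "((\<lambda>t. g t ** (v t + w t) ** Gi t) has_vector_derivative g x ** Y x ** Gi x) (at x)"
      unfolding Y_def by simp
    then show ?thesis unfolding \<zeta>0_def sum_eq by (rule vderiv1_at)
  qed
  have P0: "smooth \<zeta>0
            \<and> (\<forall>x. \<zeta>0 x \<in> {g x ** y ** matrix_inv (g x) | y. y \<in> cent a})
            \<and> (\<forall>x. vderiv 1 (\<lambda>t. g t ** v t ** matrix_inv (g t) + \<zeta>0 t) x
                   \<in> {g x ** y ** matrix_inv (g x) | y. y \<in> cent_perp a})
            \<and> (\<zeta>0 \<longlongrightarrow> 0) at_bot"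
  proof (intro conjI allI)
    show "smooth \<zeta>0" unfolding \<zeta>0_def[abs_def]
      by (intro smooth_bilinear[OF mm_bb] g_smooth w_smooth Gi_smooth)
    show "\<zeta>0 x \<in> {g x ** y ** matrix_inv (g x) | y. y \<in> cent a}" for x
      unfolding \<zeta>0_def minv using w_cent by blast
    show "vderiv 1 (\<lambda>t. g t ** v t ** matrix_inv (g t) + \<zeta>0 t) x
                   \<in> {g x ** y ** matrix_inv (g x) | y. y \<in> cent_perp a}" for x
      unfolding ex_d unfolding minv using Y_perp by blast
    have "((\<lambda>t. g t ** w t ** Gi t) \<longlongrightarrow> mat 1 ** 0 ** mat 1) at_bot"
      by (intro bounded_bilinear.tendsto[OF mm_bb] g_lim w_lim Gi_lim)
    then show "(\<zeta>0 \<longlongrightarrow> 0) at_bot" unfolding \<zeta>0_def[abs_def] by simp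
  qed
  have uniq: "\<zeta> = \<zeta>0" if P: "smooth \<zeta>
            \<and> (\<forall>x. \<zeta> x \<in> {g x ** y ** matrix_inv (g x) | y. y \<in> cent a})
            \<and> (\<forall>x. vderiv 1 (\<lambda>t. g t ** v t ** matrix_inv (g t) + \<zeta> t) x
                   \<in> {g x ** y ** matrix_inv (g x) | y. y \<in> cent_perp a})
            \<and> (\<zeta> \<longlongrightarrow> 0) at_bot" for \<zeta>
  proof -
    have z_smooth: "smooth \<zeta>" and z_in: "\<And>x. \<zeta> x \<in> {g x ** y ** matrix_inv (g x) | y. y \<in> cent a}"
      and z_d: "\<And>x. vderiv 1 (\<lambda>t. g t ** v t ** matrix_inv (g t) + \<zeta> t) x
                   \<in> {g x ** y ** matrix_inv (g x) | y. y \<in> cent_perp a}"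
      and z_lim: "(\<zeta> \<longlongrightarrow> 0) at_bot" using P by blast+
    define w2 where "w2 t = Gi t ** \<zeta> t ** g t" for t
    have w2_cent: "w2 x \<in> cent a" and z_eq: "\<zeta> x = g x ** w2 x ** Gi x" for x
    proof -
      obtain y where y: "\<zeta> x = g x ** y ** Gi x" "y \<in> cent a" using z_in[of x] unfolding minv by blast
      have "w2 x = y" unfolding w2_def y(1) by (rule cancel)
      then show "w2 x \<in> cent a" "\<zeta> x = g x ** w2 x ** Gi x" using y by auto
    qed
    have z_fun: "\<zeta> = (\<lambda>t. g t ** w2 t ** Gi t)" using z_eq by auto
    have w2_smooth: "smooth w2" unfolding w2_def[abs_def]
      by (intro smooth_bilinear[OF mm_bb] g_smooth z_smooth Gi_smooth)
    have w2d: "(w2 has_vector_derivative vderiv 1 w2 x) (at x)" for x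
      by (rule smooth_has_deriv[OF w2_smooth])
    have w2_mask: "msk a (w2 t) = w2 t" for t using w2_cent[of t] cent_iff[OF a_diag] by blast
    have w2'_mask: "msk a (vderiv 1 w2 x) = vderiv 1 w2 x" for x
      by (rule deriv_maskid[OF w2_mask w2d])
    have w2'_eq: "vderiv 1 w2 x = - p x" for x
    proof -
      define Y2 where "Y2 = vderiv 1 v x + vderiv 1 w2 x + bracket (u x) (v x + w2 x)"
      have "((\<lambda>t. v t + w2 t) has_vector_derivative vderiv 1 v x + vderiv 1 w2 x) (at x)"
        by (intro has_vector_derivative_add vd w2d)
      from conj_d[OF this]
      have "((\<lambda>t. g t ** (v t + w2 t) ** Gi t) has_vector_derivative g x ** Y2 ** Gi x) (at x)"
        unfolding Y2_def by simp
      then have "vderiv 1 (\<lambda>t. g t ** v t ** matrix_inv (g t) + \<zeta> t) x = g x ** Y2 ** Gi x"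
        unfolding z_fun sum_eq by (rule vderiv1_at)
      then obtain z where z: "g x ** Y2 ** Gi x = g x ** z ** Gi x" "z \<in> cent_perp a"
        using z_d[of x] unfolding minv by auto
      have "Y2 = Gi x ** (g x ** Y2 ** Gi x) ** g x" by (rule cancel[symmetric])
      also have "\<dots> = Gi x ** (g x ** z ** Gi x) ** g x" by (simp only: z(1))
      also have "\<dots> = z" by (rule cancel)
      finally have "Y2 = z" .
      then have "msk a Y2 = 0" using z(2) perp_iff[OF a_diag] by blast
      moreover have "msk a (bracket (u x) (w2 x)) = 0" by (rule bracket_perp_cent[OF a_diag u_perp w2_cent])
      moreover have "bracket (u x) (v x + w2 x) = bracket (u x) (v x) + bracket (u x) (w2 x)"
        by (rule bounded_bilinear.add_right[OF bracket_bb])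
      ultimately have "vderiv 1 w2 x + p x = 0" unfolding Y2_def
        by (simp add: msk_add v'_m0 v'_m0[simplified] w2'_mask w2'_mask[simplified] p_def[symmetric])
      then show ?thesis by (simp add: eq_neg_iff_add_eq_0)
    qed
    have "\<exists>c. \<forall>x\<in>UNIV. w2 x + T x = c"
    proof (rule has_derivative_zero_constant[OF convex_UNIV])
      fix x :: real
      have "((\<lambda>t. w2 t + T t) has_vector_derivative vderiv 1 w2 x + p x) (at x)"
        by (intro has_vector_derivative_add w2d Td)
      then have "((\<lambda>t. w2 t + T t) has_vector_derivative 0) (at x)" by (simp add: w2'_eq w2'_eq[simplified])
      then show "((\<lambda>t. w2 t + T t) has_derivative (\<lambda>h. 0)) (at x within UNIV)"
        by (simp add: has_vector_derivative_def)
    qed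
    then obtain c where c: "\<And>x. w2 x + T x = c" by blast
    have "((\<lambda>t. Gi t ** \<zeta> t ** g t) \<longlongrightarrow> mat 1 ** 0 ** mat 1) at_bot"
      by (intro bounded_bilinear.tendsto[OF mm_bb] g_lim z_lim Gi_lim)
    then have "(w2 \<longlongrightarrow> 0) at_bot" unfolding w2_def[abs_def] by simp
    then have "((\<lambda>t. w2 t + T t) \<longlongrightarrow> 0 + 0) at_bot" by (intro tendsto_add Tlim)
    then have "((\<lambda>t::real. c) \<longlongrightarrow> 0) at_bot" using c by simp
    then have "c = 0" by (simp add: tendsto_const_iff)
    then have "w2 x = w x" for x using c[of x] unfolding w_def by (simp add: eq_neg_iff_add_eq_0)
    then show "\<zeta> = \<zeta>0" unfolding z_fun \<zeta>0_def[abs_def] by simp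
  qed
  have L_eq: "Lop a g v x = g x ** Y x ** Gi x" for x
  proof -
    have "Pop a u v x = Y x"
      unfolding Pop_def Top_T Y_def proj_perp_def proj_p w_def
      by (simp add: bounded_bilinear.add_right[OF bracket_bb] bounded_bilinear.minus_right[OF bracket_bb] bounded_bilinear.diff_right[OF bracket_bb] p_def)
    then show ?thesis unfolding Lop_def U_eq unfolding minv by simp
  qed
  show ?thesis
  proof (intro conjI allI impI)
    show "\<exists>!\<zeta>. smooth \<zeta>
            \<and> (\<forall>x. \<zeta> x \<in> {g x ** y ** matrix_inv (g x) | y. y \<in> cent a})
            \<and> (\<forall>x. vderiv 1 (\<lambda>t. g t ** v t ** matrix_inv (g t) + \<zeta> t) x
                   \<in> {g x ** y ** matrix_inv (g x) | y. y \<in> cent_perp a})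
            \<and> (\<zeta> \<longlongrightarrow> 0) at_bot"
      using P0 uniq by (intro ex1I[of _ \<zeta>0]) blast+
  next
    fix \<zeta> x assume "smooth \<zeta>
            \<and> (\<forall>x. \<zeta> x \<in> {g x ** y ** matrix_inv (g x) | y. y \<in> cent a})
            \<and> (\<forall>x. vderiv 1 (\<lambda>t. g t ** v t ** matrix_inv (g t) + \<zeta> t) x
                   \<in> {g x ** y ** matrix_inv (g x) | y. y \<in> cent_perp a})
            \<and> (\<zeta> \<longlongrightarrow> 0) at_bot"
    then have "\<zeta> = \<zeta>0" by (rule uniq)
    then show "Lop a g v x = vderiv 1 (\<lambda>t. g t ** v t ** matrix_inv (g t) + \<zeta> t) x"
      using L_eq ex_d by simp
  qed
qed


end
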